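(* Let $G\in\mathrm{C}^1(\mathbb{R})$ be coercive and $V\in\mathrm{Lip}(\mathbb{R})$ be $1$-periodic. For all $\theta_1,\theta_2\in\mathbb{R}$ with $\theta_1<\theta_2$, we have $f_{\theta_1}(x)<f_{\theta_2}(x)$ for all $x\in\mathbb{R}$.
   Context: $G$ coercive means $G(p)\to\infty$ as $p\to\pm\infty$. For each $\theta\in\mathbb{R}$, $f_\theta\in\mathrm{C}^1(\mathbb{R})$ denotes the unique $1$-periodic function such that $\int_0^1 f_\theta(x)dx=\theta$ and, for some (unique) constant $\overline{H}(\theta)\in\mathbb{R}$, $f_\theta'(x)+G(f_\theta(x))+V(x)=\overline{H}(\theta)$ for all $x\in\mathbb{R}$. *)

theory Defs
  imports "HOL-Analysis.Analysis"
begin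

definition coercive :: "(real \<Rightarrow> real) \<Rightarrow> bool" where
  "coercive G \<longleftrightarrow> filterlim G at_top at_top \<and> filterlim G at_top at_bot"

definition periodic1 :: "(real \<Rightarrow> real) \<Rightarrow> bool" where
  "periodic1 f \<longleftrightarrow> (\<forall>x. f (x + 1) = f x)"

definition corrector :: "(real \<Rightarrow> real) \<Rightarrow> (real \<Rightarrow> real) \<Rightarrow> real \<Rightarrow> (real \<Rightarrow> real) \<Rightarrow> real \<Rightarrow> bool" where
  "corrector G V \<theta> f H \<longleftrightarrow>
     f C1_differentiable_on UNIV \<and> periodic1 f \<and> integral {0..1} f = \<theta> \<and>
     (\<forall>x. deriv f x + G (f x) + V x = H)"

definition f_theta :: "(real \<Rightarrow> real) \<Rightarrow> (real \<Rightarrow> real) \<Rightarrow> real \<Rightarrow> (real \<Rightarrow> real)" where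
  "f_theta G V \<theta> = (THE f. \<exists>H. corrector G V \<theta> f H)"

end

theory Submission imports Defs begin

lemma picard:
  fixes g V :: "real \<Rightarrow> real" and T L B H a :: real
  assumes T: "T > 0" and L: "L > 0"
    and lip: "\<And>p q. \<bar>g p - g q\<bar> \<le> L * \<bar>p - q\<bar>"
    and gB: "\<And>p. \<bar>g p\<bar> \<le> B" and VB: "\<And>x. \<bar>V x\<bar> \<le> B"
    and Vc: "continuous_on UNIV V"
  shows "\<exists>y. y 0 = a \<and> (\<forall>x\<in>{0..T}. (y has_real_derivative (H - g (y x) - V x)) (at x within {0..T}))"
proof -
  have gc: "continuous_on UNIV g"
  proof (rule lipschitz_on_continuous_on)
    show "lipschitz_on L UNIV g" using lip L by (auto simp: lipschitz_on_def dist_real_def)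
  qed
  define c where "c x = max 0 (min T x)" for x :: real
  have c01: "c x \<in> {0..T}" for x using T by (auto simp: c_def)
  have cc: "continuous_on UNIV c" unfolding c_def by (intro continuous_intros)
  define k where "k \<psi> s = H - g (exp (2*L* s) * apply_bcontfun \<psi> s) - V s" for \<psi> :: "real \<Rightarrow>\<^sub>C real" and s
  have kc: "continuous_on UNIV (k \<psi>)" for \<psi>
    unfolding k_def
    by (intro continuous_intros continuous_on_compose2[OF gc] continuous_on_compose2[OF Vc]) auto
  have kB: "\<bar>k \<psi> s\<bar> \<le> \<bar>H\<bar> + 2*B" for \<psi> s
    using gB[of "exp (2*L* s) * apply_bcontfun \<psi> s"] VB[of s] unfolding k_def by linarith
  have kint: "k \<psi> integrable_on {0..u}" for \<psi> u
    by (rule integrable_continuous_real) (rule continuous_on_subset[OF kc], auto)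
  define \<Phi>0 where "\<Phi>0 \<psi> x = exp (-(2*L*c x)) * (a + integral {0..c x} (k \<psi>))" for \<psi> x
  have \<Phi>0b: "\<Phi>0 \<psi> \<in> bcontfun" for \<psi>
  proof -
    have ic: "continuous_on {0..T} (\<lambda>u. integral {0..u} (k \<psi>))"
      by (rule indefinite_integral_continuous_1) (rule kint)
    have "continuous_on UNIV (\<lambda>x. integral {0..c x} (k \<psi>))"
      by (rule continuous_on_compose2[OF ic cc]) (use c01 in auto)
    then have cont: "continuous_on UNIV (\<Phi>0 \<psi>)"
      unfolding \<Phi>0_def by (intro continuous_intros cc)
    have "\<bar>\<Phi>0 \<psi> x\<bar> \<le> \<bar>a\<bar> + (\<bar>H\<bar> + 2*B) * T" for x
    proof -
      have e: "exp (-(2*L*c x)) \<le> 1" "exp (-(2*L*c x)) > 0" using c01[of x] L by auto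
      have "norm (integral {0..c x} (k \<psi>)) \<le> (\<bar>H\<bar> + 2*B) * (c x - 0)"
        by (rule integral_bound) (use c01[of x] kB in \<open>auto intro: continuous_on_subset[OF kc]\<close>)
      also have "\<dots> \<le> (\<bar>H\<bar> + 2*B) * T" using c01[of x] kB[of undefined 0]
        by (intro mult_left_mono) auto
      finally have i: "\<bar>integral {0..c x} (k \<psi>)\<bar> \<le> (\<bar>H\<bar> + 2*B) * T" by simp
      have "\<bar>\<Phi>0 \<psi> x\<bar> = exp (-(2*L*c x)) * \<bar>a + integral {0..c x} (k \<psi>)\<bar>"
        unfolding \<Phi>0_def using e by (simp add: abs_mult)
      also have "\<dots> \<le> 1 * \<bar>a + integral {0..c x} (k \<psi>)\<bar>"
        using e by (intro mult_right_mono) auto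
      finally show ?thesis using i abs_triangle_ineq[of a "integral {0..c x} (k \<psi>)"] by linarith
    qed
    then have "bounded (range (\<Phi>0 \<psi>))"
      by (intro boundedI[where B="\<bar>a\<bar> + (\<bar>H\<bar> + 2*B) * T"]) auto
    with cont show ?thesis unfolding bcontfun_def by auto
  qed
  define \<Phi> where "\<Phi> \<psi> = Bcontfun (\<Phi>0 \<psi>)" for \<psi>
  have \<Phi>app: "apply_bcontfun (\<Phi> \<psi>) x = \<Phi>0 \<psi> x" for \<psi> x
    unfolding \<Phi>_def using \<Phi>0b by (simp add: Bcontfun_inverse)
  have contr: "dist (\<Phi> \<psi>1) (\<Phi> \<psi>2) \<le> (1/2) * dist \<psi>1 \<psi>2" for \<psi>1 \<psi>2
  proof (rule dist_bound)
    fix x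
    define D where "D = dist \<psi>1 \<psi>2"
    define u where "u = c x"
    have u: "0 \<le> u" "u \<le> T" using c01[of x] by (auto simp: u_def)
    have D0: "D \<ge> 0" by (simp add: D_def)
    have kd: "\<bar>k \<psi>1 s - k \<psi>2 s\<bar> \<le> L * D * exp (2*L* s)" for s
    proof -
      have "\<bar>k \<psi>1 s - k \<psi>2 s\<bar> = \<bar>g (exp (2*L* s) * \<psi>1 s) - g (exp (2*L* s) * \<psi>2 s)\<bar>"
        unfolding k_def by simp
      also have "\<dots> \<le> L * \<bar>exp (2*L* s) * \<psi>1 s - exp (2*L* s) * \<psi>2 s\<bar>" by (rule lip)
      also have "\<dots> = L * exp (2*L* s) * \<bar>\<psi>1 s - \<psi>2 s\<bar>"
        by (simp add: abs_mult right_diff_distrib[symmetric])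
      also have "\<dots> \<le> L * exp (2*L* s) * D"
        using dist_bounded[of \<psi>1 s \<psi>2] L unfolding D_def dist_real_def
        by (intro mult_left_mono) auto
      finally show ?thesis by (simp add: ac_simps)
    qed
    have ex_int: "((\<lambda>s. L * D * exp (2*L* s)) has_integral (D/2 * exp (2*L*u) - D/2 * exp (2*L*0))) {0..u}"
    proof (rule fundamental_theorem_of_calculus)
      show "0 \<le> u" by fact
      fix s assume "s \<in> {0..u}"
      show "((\<lambda>s. D/2 * exp (2*L* s)) has_vector_derivative L * D * exp (2*L* s)) (at s within {0..u})"
        unfolding has_real_derivative_iff_has_vector_derivative[symmetric]
        using L by (auto intro!: derivative_eq_intros)
    qed
    have "\<bar>integral {0..u} (k \<psi>1) - integral {0..u} (k \<psi>2)\<bar> = \<bar>integral {0..u} (\<lambda>s. k \<psi>1 s - k \<psi>2 s)\<bar>"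
      by (simp add: integral_diff kint)
    also have "\<dots> \<le> integral {0..u} (\<lambda>s. L * D * exp (2*L* s))"
      using integral_norm_bound_integral[of "\<lambda>s. k \<psi>1 s - k \<psi>2 s" "{0..u}" "\<lambda>s. L * D * exp (2*L* s)"]
        kd ex_int kint by (auto intro: integrable_diff simp: has_integral_integrable)
    also have "\<dots> = D/2 * exp (2*L*u) - D/2" using integral_unique[OF ex_int] by simp
    finally have I: "\<bar>integral {0..u} (k \<psi>1) - integral {0..u} (k \<psi>2)\<bar> \<le> D/2 * exp (2*L*u) - D/2" .
    have "dist (\<Phi> \<psi>1 x) (\<Phi> \<psi>2 x) = exp (-(2*L*u)) * \<bar>integral {0..u} (k \<psi>1) - integral {0..u} (k \<psi>2)\<bar>"
      unfolding \<Phi>app \<Phi>0_def dist_real_def u_def[symmetric]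
      by (simp add: abs_mult right_diff_distrib[symmetric])
    also have "\<dots> \<le> exp (-(2*L*u)) * (D/2 * exp (2*L*u) - D/2)"
      by (intro mult_left_mono I) auto
    also have "\<dots> = D/2 - D/2 * exp (-(2*L*u))"
      by (simp add: algebra_simps exp_minus field_simps)
    also have "\<dots> \<le> D/2" using D0 by simp
    finally show "dist (\<Phi> \<psi>1 x) (\<Phi> \<psi>2 x) \<le> (1/2) * dist \<psi>1 \<psi>2" by (simp add: D_def)
  qed
  obtain \<psi> where fxp: "\<Phi> \<psi> = \<psi>"
    using banach_fix_type[of "1/2" \<Phi>] contr by auto
  define y where "y x = a + integral {0..x} (k \<psi>)" for x
  have yx: "exp (2*L*x) * \<psi> x = y x" if "x \<in> {0..T}" for x
  proof -
    have "c x = x" using that by (auto simp: c_def)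
    then have "\<psi> x = exp (-(2*L*x)) * y x"
      using arg_cong[OF fxp, of "\<lambda>f. apply_bcontfun f x"] unfolding \<Phi>app \<Phi>0_def y_def by simp
    then show ?thesis by (simp add: exp_minus field_simps)
  qed
  show ?thesis
  proof (intro exI conjI ballI)
    show "y 0 = a" by (simp add: y_def)
    fix x assume x: "x \<in> {0..T}"
    have "((\<lambda>x. integral {0..x} (k \<psi>)) has_real_derivative k \<psi> x) (at x within {0..T})"
      by (rule integral_has_real_derivative) (use x in \<open>auto intro: continuous_on_subset[OF kc]\<close>)
    then have "(y has_real_derivative k \<psi> x) (at x within {0..T})"
      unfolding y_def by (auto intro!: derivative_eq_intros)
    moreover have "k \<psi> x = H - g (y x) - V x" unfolding k_def using yx[OF x] by simp
    ultimately show "(y has_real_derivative H - g (y x) - V x) (at x within {0..T})" by simp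
  qed
qed

lemma gronwall_sq:
  fixes h h' :: "real \<Rightarrow> real" and s t K c :: real
  assumes st: "s \<le> t" and hc: "continuous_on {s..t} h"
    and hd: "\<And>x. x \<in> {s<..<t} \<Longrightarrow> (h has_real_derivative h' x) (at x)"
    and hb: "\<And>x. x \<in> {s<..<t} \<Longrightarrow> \<bar>h' x\<bar> \<le> K * \<bar>h x\<bar> + c"
    and K: "K \<ge> 0" and c: "c \<ge> 0"
  shows "(h t)^2 \<le> exp ((2*K+1)*(t-s)) * ((h s)^2 + c^2 * (t-s))"
proof -
  define M where "M = 2*K+1"
  define \<phi> where "\<phi> x = exp (-(M*(x-s))) * (h x)^2 - c^2 * (x-s)" for x
  have "\<phi> t \<le> \<phi> s"
  proof (rule DERIV_nonpos_imp_decreasing_open[OF st])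
    fix x assume x: "s < x" "x < t"
    let ?d = "exp (-(M*(x-s))) * (-M * (h x)^2 + 2 * h x * h' x) - c^2"
    have "(\<phi> has_real_derivative ?d) (at x)"
      unfolding \<phi>_def using hd[of x] x
      by (auto intro!: derivative_eq_intros simp: algebra_simps power2_eq_square)
    moreover have "?d \<le> 0"
    proof -
      have "2 * h x * h' x \<le> 2 * \<bar>h x\<bar> * \<bar>h' x\<bar>"
        by (metis abs_ge_self abs_mult mult.assoc mult_left_mono zero_le_numeral abs_mult)
      also have "\<dots> \<le> 2 * \<bar>h x\<bar> * (K * \<bar>h x\<bar> + c)"
        using hb[of x] x by (intro mult_left_mono) auto
      also have "\<dots> \<le> M * (h x)^2 + c^2"
      proof -
        have "2 * \<bar>h x\<bar> * c \<le> (h x)^2 + c^2"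
          using sum_squares_bound[of "\<bar>h x\<bar>" c] by (simp add: power2_eq_square algebra_simps)
        then show ?thesis unfolding M_def by (simp add: algebra_simps power2_eq_square)
      qed
      finally have A: "-M * (h x)^2 + 2 * h x * h' x \<le> c^2" by simp
      have e: "exp (-(M*(x-s))) \<le> 1" "exp (-(M*(x-s))) > 0" using x K by (auto simp: M_def)
      have "exp (-(M*(x-s))) * (-M * (h x)^2 + 2 * h x * h' x) \<le> exp (-(M*(x-s))) * c^2"
        using A e by (intro mult_left_mono) auto
      also have "\<dots> \<le> 1 * c^2" using e by (intro mult_right_mono) auto
      finally show ?thesis by simp
    qed
    ultimately show "\<exists>y. (\<phi> has_real_derivative y) (at x) \<and> y \<le> 0" by blast
  next
    show "continuous_on {s..t} \<phi>" unfolding \<phi>_def by (intro continuous_intros hc)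
  qed
  then have P: "exp (-(M*(t-s))) * (h t)^2 \<le> (h s)^2 + c^2 * (t-s)" unfolding \<phi>_def by simp
  have E: "exp (M*(t-s)) * exp (-(M*(t-s))) = 1"
    by (simp add: exp_add[symmetric])
  have "(h t)^2 = exp (M*(t-s)) * (exp (-(M*(t-s))) * (h t)^2)"
    using E by (simp add: mult.assoc[symmetric])
  also have "\<dots> \<le> exp (M*(t-s)) * ((h s)^2 + c^2 * (t-s))"
    using P by (intro mult_left_mono) auto
  finally show ?thesis by (simp add: M_def)
qed

lemma cross:
  fixes h :: "real \<Rightarrow> real" and s t :: real
  assumes st: "s < t" and hc: "continuous_on {s..t} h"
    and hz: "\<And>z. z \<in> {s<..t} \<Longrightarrow> h z = 0 \<Longrightarrow> \<exists>d<0. (h has_real_derivative d) (at z)"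
    and hs: "h s < 0"
  shows "h t < 0"
proof (rule ccontr)
  assume "\<not> h t < 0"
  define S where "S = {x \<in> {s..t}. 0 \<le> h x}"
  have cl: "closed S" unfolding S_def
    by (rule continuous_on_closed_Collect_le) (auto intro: hc continuous_intros)
  have ne: "S \<noteq> {}" using \<open>\<not> h t < 0\<close> st unfolding S_def by auto
  have bb: "bdd_below S" unfolding S_def by (auto intro: bdd_belowI[of _ s])
  define z where "z = Inf S"
  have zS: "z \<in> S" unfolding z_def by (rule closed_contains_Inf[OF ne bb cl])
  have low: "z \<le> x" if "x \<in> S" for x unfolding z_def by (rule cInf_lower[OF that bb])
  have zs: "s < z" using zS hs unfolding S_def by (cases "z = s") auto
  have neg: "h x < 0" if "s \<le> x" "x < z" for x
    using low[of x] that zS unfolding S_def by force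
  have hz0: "h z = 0"
  proof (rule ccontr)
    assume "h z \<noteq> 0"
    then have "h z > 0" using zS unfolding S_def by auto
    have "\<exists>x\<ge>s. x \<le> z \<and> h x = 0"
      by (rule IVT'[of h s 0 z]) (use hs \<open>h z > 0\<close> zs zS in \<open>auto simp: S_def intro: continuous_on_subset[OF hc]\<close>)
    then obtain x where "s \<le> x" "x \<le> z" "h x = 0" by blast
    then show False using neg[of x] \<open>h z > 0\<close> by (cases "x = z") auto
  qed
  obtain d where d: "d < 0" "(h has_real_derivative d) (at z)"
    using hz[of z] zs zS hz0 unfolding S_def by auto
  obtain e where e: "e > 0" "\<And>\<eta>. \<eta> > 0 \<Longrightarrow> \<eta> < e \<Longrightarrow> h z < h (z - \<eta>)"
    using DERIV_neg_dec_left[OF d(2) d(1)] by blast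
  define \<eta> where "\<eta> = min e (z - s) / 2"
  have "\<eta> > 0" "\<eta> < e" "\<eta> < z - s" using e zs by (auto simp: \<eta>_def)
  then have "h z < h (z - \<eta>)" "h (z - \<eta>) < 0" using e neg[of "z - \<eta>"] by auto
  then show False using hz0 by simp
qed

lemma periodic_int:
  assumes "periodic1 f"
  shows "f (x + real_of_int k) = f x"
proof -
  have pn: "f (y + real n) = f y" for y n
  proof (induction n)
    case (Suc n)
    have "f (y + real (Suc n)) = f ((y + real n) + 1)" by (simp add: algebra_simps)
    also have "\<dots> = f (y + real n)" using assms by (simp add: periodic1_def)
    finally show ?case using Suc by simp
  qed simp
  show ?thesis
  proof (cases "k \<ge> 0")
    case True
    then show ?thesis using pn[of x "nat k"] by simp
  next
    case False
    then show ?thesis using pn[of "x + real_of_int k" "nat (-k)"] by simp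
  qed
qed

lemma uniq_gen:
  fixes g V y z :: "real \<Rightarrow> real"
  assumes lip: "\<And>p q. \<bar>g p - g q\<bar> \<le> L * \<bar>p - q\<bar>" and L: "L \<ge> 0"
    and st: "s \<le> t" and yc: "continuous_on {s..t} y" and zc: "continuous_on {s..t} z"
    and yd: "\<And>x. x \<in> {s<..<t} \<Longrightarrow> (y has_real_derivative (H - g (y x) - V x)) (at x)"
    and zd: "\<And>x. x \<in> {s<..<t} \<Longrightarrow> (z has_real_derivative (H - g (z x) - V x)) (at x)"
    and e: "y s = z s"
  shows "y t = z t"
proof -
  have "((\<lambda>x. y x - z x) t)^2 \<le> exp ((2*L+1)*(t-s)) * (((\<lambda>x. y x - z x) s)^2 + 0^2 * (t-s))"
  proof (rule gronwall_sq[OF st])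
    show "continuous_on {s..t} (\<lambda>x. y x - z x)" by (intro continuous_intros yc zc)
    fix x assume x: "x \<in> {s<..<t}"
    show "((\<lambda>x. y x - z x) has_real_derivative (g (z x) - g (y x))) (at x)"
      using DERIV_diff[OF yd[OF x] zd[OF x]] by simp
    show "\<bar>g (z x) - g (y x)\<bar> \<le> L * \<bar>y x - z x\<bar> + 0"
      using lip[of "z x" "y x"] by (simp add: abs_minus_commute)
  qed (use L in auto)
  then show ?thesis using e by simp
qed

locale clip =
  fixes g V :: "real \<Rightarrow> real" and L B :: real
  assumes L: "L > 0" and lip: "\<And>p q. \<bar>g p - g q\<bar> \<le> L * \<bar>p - q\<bar>"
    and gB: "\<And>p. \<bar>g p\<bar> \<le> B" and VB: "\<And>x. \<bar>V x\<bar> \<le> B" and Vc: "continuous_on UNIV V"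
    and Vp: "periodic1 V"
begin

definition issol :: "real \<Rightarrow> real \<Rightarrow> (real \<Rightarrow> real) \<Rightarrow> bool" where
  "issol H a y \<longleftrightarrow> y 0 = a \<and> (\<forall>x\<in>{0..4}. (y has_real_derivative (H - g (y x) - V x)) (at x within {0..4}))"

definition sol :: "real \<Rightarrow> real \<Rightarrow> real \<Rightarrow> real" where
  "sol H a = (SOME y. issol H a y)"

lemma sol: "issol H a (sol H a)"
proof -
  obtain y where "y 0 = a" "\<forall>x\<in>{0..4}. (y has_real_derivative (H - g (y x) - V x)) (at x within {0..4})"
    using picard[of 4 L g B V a H] L lip gB VB Vc by auto
  then have "issol H a y" by (simp add: issol_def)
  then show ?thesis unfolding sol_def by (metis someI)
qed

lemma B0: "B \<ge> 0" using VB[of 0] by linarith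

lemma issol_cont: "issol H a y \<Longrightarrow> continuous_on {0..4} y"
  unfolding issol_def by (intro DERIV_continuous_on) auto

lemma issol_within: "issol H a y \<Longrightarrow> x \<in> {0..4} \<Longrightarrow> (y has_real_derivative (H - g (y x) - V x)) (at x within {0..4})"
  unfolding issol_def by blast

lemma issol_at: assumes "issol H a y" "x \<in> {0<..<4}" shows "(y has_real_derivative (H - g (y x) - V x)) (at x)"
proof -
  have "x \<in> interior {0..4}" using assms(2) by simp
  then have "at x within {0..4} = at x" by (rule at_within_interior)
  then show ?thesis using issol_within[OF assms(1), of x] assms(2) by simp
qed

lemma issol_0: "issol H a y \<Longrightarrow> y 0 = a" unfolding issol_def by auto

definition E :: real where "E = exp ((2*L+1)*4)"

lemma E1: "E \<ge> 1" unfolding E_def using L by simp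

lemma diff_est:
  assumes y1: "issol H1 a1 y1" and y2: "issol H2 a2 y2" and x: "x \<in> {0..4}"
  shows "\<bar>y1 x - y2 x\<bar> \<le> E * (\<bar>a1 - a2\<bar> + 2 * \<bar>H1 - H2\<bar>)"
proof -
  have "((\<lambda>x. y1 x - y2 x) x)^2 \<le> exp ((2*L+1)*(x-0)) * (((\<lambda>x. y1 x - y2 x) 0)^2 + \<bar>H1 - H2\<bar>^2 * (x-0))"
  proof (rule gronwall_sq)
    show "continuous_on {0..x} (\<lambda>x. y1 x - y2 x)"
      using issol_cont[OF y1] issol_cont[OF y2] x by (auto intro!: continuous_intros intro: continuous_on_subset)
    fix u assume u: "u \<in> {0<..<x}"
    then have u4: "u \<in> {0<..<4}" using x by auto
    show "((\<lambda>x. y1 x - y2 x) has_real_derivative ((H1 - H2) - (g (y1 u) - g (y2 u)))) (at u)"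
      using DERIV_diff[OF issol_at[OF y1 u4] issol_at[OF y2 u4]] by (simp add: algebra_simps)
    show "\<bar>(H1 - H2) - (g (y1 u) - g (y2 u))\<bar> \<le> L * \<bar>y1 u - y2 u\<bar> + \<bar>H1 - H2\<bar>"
      using lip[of "y1 u" "y2 u"] by linarith
  qed (use x L in auto)
  also have "\<dots> \<le> E * ((a1 - a2)^2 + \<bar>H1 - H2\<bar>^2 * 4)"
  proof (rule mult_mono)
    have "(2*L+1)*(x-0) \<le> (2*L+1)*4" using x L by (intro mult_left_mono) auto
    then show "exp ((2*L+1)*(x-0)) \<le> E" unfolding E_def by simp
    show "(y1 0 - y2 0)^2 + \<bar>H1 - H2\<bar>^2 * (x - 0) \<le> (a1 - a2)^2 + \<bar>H1 - H2\<bar>^2 * 4"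
      using issol_0[OF y1] issol_0[OF y2] x by (auto intro: mult_left_mono)
  qed (use E1 x in auto)
  also have "\<dots> \<le> E * (\<bar>a1 - a2\<bar> + 2 * \<bar>H1 - H2\<bar>)^2"
    using E1 by (intro mult_left_mono) (auto simp: power2_eq_square algebra_simps)
  also have "\<dots> \<le> (E * (\<bar>a1 - a2\<bar> + 2 * \<bar>H1 - H2\<bar>))^2"
  proof -
    have "E * 1 \<le> E * E" using E1 by (intro mult_left_mono) auto
    then have "E * (\<bar>a1 - a2\<bar> + 2 * \<bar>H1 - H2\<bar>)^2 \<le> (E * E) * (\<bar>a1 - a2\<bar> + 2 * \<bar>H1 - H2\<bar>)^2"
      by (intro mult_right_mono) auto
    then show ?thesis by (simp add: power_mult_distrib power2_eq_square ac_simps)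
  qed
  finally show ?thesis
    using abs_le_square_iff[of "y1 x - y2 x" "E * (\<bar>a1 - a2\<bar> + 2 * \<bar>H1 - H2\<bar>)"] E1 by auto
qed

lemma strict_mono_H:
  assumes y1: "issol H1 a y1" and y2: "issol H2 a y2" and H: "H1 < H2" and x: "0 < x" "x < 4"
  shows "y1 x < y2 x"
proof -
  define h where "h u = y1 u - y2 u" for u
  have hd0: "(h has_real_derivative (H1 - H2)) (at 0 within {0..4})"
  proof -
    have "(h has_real_derivative (H1 - g (y1 0) - V 0) - (H2 - g (y2 0) - V 0)) (at 0 within {0..4})"
      unfolding h_def by (intro DERIV_diff issol_within[OF y1] issol_within[OF y2]) auto
    then show ?thesis using issol_0[OF y1] issol_0[OF y2] by simp
  qed
  obtain d where d: "d > 0" "\<And>\<eta>. \<eta> > 0 \<Longrightarrow> 0 + \<eta> \<in> {0..4} \<Longrightarrow> \<eta> < d \<Longrightarrow> h 0 > h (0 + \<eta>)"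
    using has_real_derivative_neg_dec_right[OF hd0] H by force
  have h0: "h 0 = 0" unfolding h_def using issol_0[OF y1] issol_0[OF y2] by simp
  define \<eta> where "\<eta> = min d x / 2"
  have \<eta>: "0 < \<eta>" "\<eta> < d" "\<eta> < x" using d x by (auto simp: \<eta>_def)
  have h\<eta>: "h \<eta> < 0" using d(2)[of \<eta>] \<eta> x h0 by auto
  show ?thesis
  proof -
    have "h x < 0"
    proof (rule cross[of \<eta> x h])
      show "\<eta> < x" by fact
      show "continuous_on {\<eta>..x} h" unfolding h_def
        using issol_cont[OF y1] issol_cont[OF y2] x \<eta> by (auto intro!: continuous_intros intro: continuous_on_subset)
      show "h \<eta> < 0" by fact
      fix z assume z: "z \<in> {\<eta><..x}" "h z = 0"
      then have z4: "z \<in> {0<..<4}" using \<eta> x by auto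
      have "(h has_real_derivative (H1 - g (y1 z) - V z) - (H2 - g (y2 z) - V z)) (at z)"
        unfolding h_def by (intro DERIV_diff issol_at[OF y1 z4] issol_at[OF y2 z4])
      moreover have "y1 z = y2 z" using z(2) by (simp add: h_def)
      ultimately show "\<exists>d<0. (h has_real_derivative d) (at z)" using H by (intro exI[of _ "H1 - H2"]) auto
    qed
    then show ?thesis by (simp add: h_def)
  qed
qed

lemma bounds:
  assumes y: "issol H a y" and x: "x \<in> {0..4}"
  shows "a + (H - 2*B) * x \<le> y x" "y x \<le> a + (H + 2*B) * x"
proof -
  have c: "continuous_on {0..x} y" using issol_cont[OF y] x by (auto intro: continuous_on_subset)
  have "(\<lambda>u. y u - (a + (H - 2*B) * u)) 0 \<le> (\<lambda>u. y u - (a + (H - 2*B) * u)) x"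
  proof (rule DERIV_nonneg_imp_increasing_open[of 0 x "\<lambda>u. y u - (a + (H - 2*B) * u)"])
    show "0 \<le> x" using x by auto
    fix u assume u: "0 < u" "u < x"
    then have u4: "u \<in> {0<..<4}" using x by auto
    have "((\<lambda>u. y u - (a + (H - 2*B) * u)) has_real_derivative (H - g (y u) - V u) - (H - 2*B)) (at u)"
      by (rule derivative_eq_intros issol_at[OF y u4] refl)+ simp
    moreover have "(H - g (y u) - V u) - (H - 2*B) \<ge> 0" using gB[of "y u"] VB[of u] by linarith
    ultimately show "\<exists>d. ((\<lambda>u. y u - (a + (H - 2*B) * u)) has_real_derivative d) (at u) \<and> 0 \<le> d" by blast
  qed (intro continuous_intros c)
  then show "a + (H - 2*B) * x \<le> y x" using issol_0[OF y] by simp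
  have "(\<lambda>u. y u - (a + (H + 2*B) * u)) 0 \<ge> (\<lambda>u. y u - (a + (H + 2*B) * u)) x"
  proof (rule DERIV_nonpos_imp_decreasing_open[of 0 x "\<lambda>u. y u - (a + (H + 2*B) * u)"])
    show "0 \<le> x" using x by auto
    fix u assume u: "0 < u" "u < x"
    then have u4: "u \<in> {0<..<4}" using x by auto
    have "((\<lambda>u. y u - (a + (H + 2*B) * u)) has_real_derivative (H - g (y u) - V u) - (H + 2*B)) (at u)"
      by (rule derivative_eq_intros issol_at[OF y u4] refl)+ simp
    moreover have "(H - g (y u) - V u) - (H + 2*B) \<le> 0" using gB[of "y u"] VB[of u] by linarith
    ultimately show "\<exists>d. ((\<lambda>u. y u - (a + (H + 2*B) * u)) has_real_derivative d) (at u) \<and> d \<le> 0" by blast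
  qed (intro continuous_intros c)
  then show "y x \<le> a + (H + 2*B) * x" using issol_0[OF y] by simp
qed


definition P :: "real \<Rightarrow> real \<Rightarrow> real" where "P a H = sol H a 1"

lemma P_lip: "\<bar>P a H - P a' H'\<bar> \<le> E * (\<bar>a - a'\<bar> + 2 * \<bar>H - H'\<bar>)"
  unfolding P_def by (rule diff_est[OF sol sol]) auto

lemma P_strict: "H1 < H2 \<Longrightarrow> P a H1 < P a H2"
  unfolding P_def by (rule strict_mono_H[OF sol sol]) auto

lemma P_mono: "H1 \<le> H2 \<Longrightarrow> P a H1 \<le> P a H2"
  using P_strict[of H1 H2 a] by (cases "H1 = H2") auto

lemma P_bounds: "a + (H - 2*B) \<le> P a H" "P a H \<le> a + (H + 2*B)"
  unfolding P_def using bounds[OF sol[of H a], of 1] by auto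

lemma lip_cont:
  fixes f :: "real \<Rightarrow> real"
  assumes "\<And>x y. \<bar>f x - f y\<bar> \<le> C * \<bar>x - y\<bar>" "C \<ge> 0"
  shows "continuous_on S f"
  by (rule lipschitz_on_continuous_on[of C]) (use assms in \<open>auto simp: lipschitz_on_def dist_real_def\<close>)

lemma Hs_ex: "\<exists>H. P a H = a \<and> \<bar>H\<bar> \<le> 2*B"
proof -
  have c: "continuous_on {-2*B..2*B} (\<lambda>H. P a H)"
  proof (rule lip_cont[of _ "2*E"])
    show "\<bar>P a x - P a y\<bar> \<le> 2 * E * \<bar>x - y\<bar>" for x y using P_lip[of a x a y] by simp
  qed (use E1 in auto)
  have l: "P a (-2*B) \<le> a" using P_bounds(2)[of a "-2*B"] by simp
  have r: "a \<le> P a (2*B)" using P_bounds(1)[of a "2*B"] by simp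
  have "\<exists>H\<ge>-2*B. H \<le> 2*B \<and> P a H = a"
    by (rule IVT'[OF l r _ c]) (use B0 in simp)
  then show ?thesis by auto
qed

definition Hs :: "real \<Rightarrow> real" where "Hs a = (THE H. P a H = a)"

lemma Hs: "P a (Hs a) = a" "\<bar>Hs a\<bar> \<le> 2*B"
proof -
  obtain H where H: "P a H = a" "\<bar>H\<bar> \<le> 2*B" using Hs_ex by blast
  have u: "H' = H" if "P a H' = a" for H'
  proof (rule ccontr)
    assume "H' \<noteq> H"
    then have "H < H' \<or> H' < H" by linarith
    then show False using P_strict[of H H' a] P_strict[of H' H a] that H(1) by auto
  qed
  have "Hs a = H" unfolding Hs_def by (rule the_equality) (use H(1) u in blast)+
  then show "P a (Hs a) = a" "\<bar>Hs a\<bar> \<le> 2*B" using H by auto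
qed

lemma Hs_cont:
  assumes e: "e > 0"
  shows "\<exists>d>0. \<forall>a'. \<bar>a' - a\<bar> < d \<longrightarrow> \<bar>Hs a' - Hs a\<bar> < e"
proof -
  define h0 where "h0 = Hs a"
  have pp: "P a (h0 + e) > a" using P_strict[of h0 "h0+e" a] Hs(1)[of a] e by (simp add: h0_def)
  have pm: "P a (h0 - e) < a" using P_strict[of "h0-e" h0 a] Hs(1)[of a] e by (simp add: h0_def)
  define \<gamma> where "\<gamma> = min (P a (h0 + e) - a) (a - P a (h0 - e))"
  have \<gamma>: "\<gamma> > 0" using pp pm by (simp add: \<gamma>_def)
  define d where "d = \<gamma> / (E + 2)"
  have d: "d > 0" using \<gamma> E1 by (simp add: d_def)
  have dd: "(E + 1) * d < \<gamma>"
  proof -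
    have "(E + 1) * d < (E + 2) * d" using d by (intro mult_strict_right_mono) auto
    also have "\<dots> = \<gamma>" using E1 by (simp add: d_def)
    finally show ?thesis .
  qed
  show ?thesis
  proof (intro exI[of _ d] conjI allI impI d)
    fix a' assume a': "\<bar>a' - a\<bar> < d"
    have l1: "\<bar>P a' (h0 + e) - P a (h0 + e)\<bar> \<le> E * \<bar>a' - a\<bar>" using P_lip[of a' "h0+e" a "h0+e"] by simp
    have l2: "\<bar>P a' (h0 - e) - P a (h0 - e)\<bar> \<le> E * \<bar>a' - a\<bar>" using P_lip[of a' "h0-e" a "h0-e"] by simp
    have Ea: "E * \<bar>a' - a\<bar> \<le> E * d" using a' E1 by (intro mult_left_mono) auto
    have g1: "\<gamma> \<le> P a (h0 + e) - a" "\<gamma> \<le> a - P a (h0 - e)" by (simp_all add: \<gamma>_def)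
    have Ed: "(E + 1) * d = E * d + d" by (simp add: algebra_simps)
    have q1: "P a' (h0 + e) > a'"
      using l1 Ea dd a' g1 Ed by linarith
    have q2: "P a' (h0 - e) < a'"
      using l2 Ea dd a' g1 Ed by linarith
    have "Hs a' < h0 + e"
    proof (rule ccontr)
      assume "\<not> Hs a' < h0 + e"
      then have "P a' (h0 + e) \<le> P a' (Hs a')" by (intro P_mono) auto
      then show False using q1 Hs(1)[of a'] by simp
    qed
    moreover have "Hs a' > h0 - e"
    proof (rule ccontr)
      assume "\<not> Hs a' > h0 - e"
      then have "P a' (Hs a') \<le> P a' (h0 - e)" by (intro P_mono) auto
      then show False using q2 Hs(1)[of a'] by simp
    qed
    ultimately show "\<bar>Hs a' - Hs a\<bar> < e" by (simp add: h0_def abs_less_iff)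
  qed
qed

definition ys :: "real \<Rightarrow> real \<Rightarrow> real" where "ys a = sol (Hs a) a"
definition m :: "real \<Rightarrow> real" where "m a = integral {0..1} (ys a)"

lemma ys_sol: "issol (Hs a) a (ys a)" unfolding ys_def by (rule sol)

lemma ys_int: "ys a integrable_on {0..1}"
  by (rule integrable_continuous_real) (rule continuous_on_subset[OF issol_cont[OF ys_sol]], auto)

lemma m_diff: "\<bar>m a - m a'\<bar> \<le> E * (\<bar>a - a'\<bar> + 2 * \<bar>Hs a - Hs a'\<bar>)"
proof -
  define C where "C = E * (\<bar>a - a'\<bar> + 2 * \<bar>Hs a - Hs a'\<bar>)"
  have "\<bar>m a - m a'\<bar> = \<bar>integral {0..1} (\<lambda>x. ys a x - ys a' x)\<bar>"
    unfolding m_def by (simp add: integral_diff ys_int)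
  also have "\<dots> \<le> integral {0..1} (\<lambda>x::real. C)"
  proof -
    have "norm (integral {0..1} (\<lambda>x. ys a x - ys a' x)) \<le> integral {0..1} (\<lambda>x::real. C)"
    proof (rule Henstock_Kurzweil_Integration.integral_norm_bound_integral)
      show "(\<lambda>x. ys a x - ys a' x) integrable_on {0..1}" by (intro integrable_diff ys_int)
      show "(\<lambda>x::real. C) integrable_on {0..1}" by (rule integrable_const_ivl)
      fix x :: real assume "x \<in> {0..1}"
      then show "norm (ys a x - ys a' x) \<le> C" unfolding C_def using diff_est[OF ys_sol ys_sol, of x a a'] by simp
    qed
    then show ?thesis by simp
  qed
  also have "\<dots> = C" by simp
  finally show ?thesis by (simp add: C_def)
qed

lemma m_cont: "continuous_on UNIV m"
  unfolding continuous_on_iff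
proof (intro ballI allI impI)
  fix a e :: real assume e: "e > 0"
  obtain d where d: "d > 0" "\<And>a'. \<bar>a' - a\<bar> < d \<Longrightarrow> \<bar>Hs a' - Hs a\<bar> < e / (4*E)"
    using Hs_cont[of "e / (4*E)" a] e E1 by auto
  show "\<exists>d>0. \<forall>x'\<in>UNIV. dist x' a < d \<longrightarrow> dist (m x') (m a) < e"
  proof (intro exI[of _ "min d (e / (2*E))"] conjI ballI impI)
    show "min d (e / (2*E)) > 0" using d e E1 by auto
    fix a' assume "dist a' a < min d (e / (2*E))"
    then have a1: "\<bar>a' - a\<bar> < d" "\<bar>a' - a\<bar> < e / (2*E)" by (auto simp: dist_real_def)
    have h: "\<bar>Hs a' - Hs a\<bar> < e / (4*E)" using d(2)[OF a1(1)] .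
    have "\<bar>m a' - m a\<bar> \<le> E * (\<bar>a' - a\<bar> + 2 * \<bar>Hs a' - Hs a\<bar>)" by (rule m_diff)
    also have "\<dots> < E * (e / (2*E) + 2 * (e / (4*E)))"
      using a1 h E1 by (intro mult_strict_left_mono) auto
    also have "\<dots> = e" using E1 by (simp add: field_simps)
    finally show "dist (m a') (m a) < e" by (simp add: dist_real_def)
  qed
qed

lemma m_bounds: "a - 4*B \<le> m a" "m a \<le> a + 4*B"
proof -
  have b: "a - 4*B \<le> ys a x \<and> ys a x \<le> a + 4*B" if "x \<in> {0..1}" for x
  proof -
    have "a + (Hs a - 2*B) * x \<le> ys a x" "ys a x \<le> a + (Hs a + 2*B) * x"
      using bounds[OF ys_sol, of x] that by auto
    moreover have "(Hs a - 2*B) * x \<ge> -(4*B)" "(Hs a + 2*B) * x \<le> 4*B"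
    proof -
      have "(Hs a - 2*B) * x \<ge> (-(4*B)) * x" using Hs(2)[of a] that by (intro mult_right_mono) auto
      moreover have "(4*B) * x \<le> 4*B" using that B0 mult_left_le[of x "4*B"] by auto
      then have "(-(4*B)) * x \<ge> -(4*B)" by simp
      ultimately show "(Hs a - 2*B) * x \<ge> -(4*B)" by linarith
      have "(Hs a + 2*B) * x \<le> (4*B) * x" using Hs(2)[of a] that by (intro mult_right_mono) auto
      moreover have "(4*B) * x \<le> 4*B" using that B0 mult_left_le[of x "4*B"] by auto
      ultimately show "(Hs a + 2*B) * x \<le> 4*B" by linarith
    qed
    ultimately show ?thesis by linarith
  qed
  have "integral {0..1} (\<lambda>x::real. a - 4*B) \<le> m a"
    unfolding m_def by (rule Henstock_Kurzweil_Integration.integral_le) (use b ys_int in auto)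
  then show "a - 4*B \<le> m a" by simp
  have "m a \<le> integral {0..1} (\<lambda>x::real. a + 4*B)"
    unfolding m_def by (rule Henstock_Kurzweil_Integration.integral_le) (use b ys_int in auto)
  then show "m a \<le> a + 4*B" by simp
qed

lemma m_hits: "\<exists>a. m a = \<theta>"
proof -
  have "\<exists>a\<ge>\<theta> - 4*B. a \<le> \<theta> + 4*B \<and> m a = \<theta>"
    by (rule IVT') (use m_bounds[of "\<theta> - 4*B"] m_bounds[of "\<theta> + 4*B"] B0 m_cont in \<open>auto intro: continuous_on_subset\<close>)
  then show ?thesis by auto
qed

lemma ys_per: assumes x: "x \<in> {0..3}" shows "ys a (x + 1) = ys a x"
proof -
  let ?H = "Hs a" and ?y = "ys a"
  have "(\<lambda>u. ?y (u + 1)) x = ?y x"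
  proof (rule uniq_gen[of g L 0 x _ _ ?H V])
    show "\<And>p q. \<bar>g p - g q\<bar> \<le> L * \<bar>p - q\<bar>" by (rule lip)
    show "L \<ge> 0" using L by simp
    show "0 \<le> x" using x by simp
    have c: "continuous_on {0..4} ?y" by (rule issol_cont[OF ys_sol])
    show "continuous_on {0..x} ?y" using x by (auto intro: continuous_on_subset[OF c])
    show "continuous_on {0..x} (\<lambda>u. ?y (u + 1))"
      by (rule continuous_on_compose2[OF c]) (use x in \<open>auto intro!: continuous_intros\<close>)
    fix u assume u: "u \<in> {0<..<x}"
    show "(?y has_real_derivative ?H - g (?y u) - V u) (at u)"
      using issol_at[OF ys_sol, of u] u x by auto
    have "(?y has_real_derivative ?H - g (?y (u+1)) - V (u+1)) (at (u+1))"
      using issol_at[OF ys_sol, of "u+1"] u x by auto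
    then have "((\<lambda>u. ?y (u + 1)) has_real_derivative ?H - g (?y (u+1)) - V (u+1)) (at u)"
      by (simp add: DERIV_shift)
    moreover have "V (u+1) = V u" using Vp by (simp add: periodic1_def)
    ultimately show "((\<lambda>u. ?y (u + 1)) has_real_derivative ?H - g ((\<lambda>u. ?y (u + 1)) u) - V u) (at u)" by simp
  next
    show "(\<lambda>u. ?y (u + 1)) 0 = ?y 0" using Hs(1)[of a] issol_0[OF ys_sol] by (simp add: P_def ys_def)
  qed
  then show ?thesis by simp
qed


lemma perext:
  "\<exists>f. (\<forall>x. (f has_real_derivative (Hs a - g (f x) - V x)) (at x)) \<and> periodic1 f \<and> (\<forall>x\<in>{0..1}. f x = ys a x)"
proof -
  define f where "f x = ys a (x - of_int \<lfloor>x\<rfloor> + 1)" for x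
  have loc: "f t = ys a (t + (1 - of_int n))" if "t \<in> {of_int n - 1 <..< of_int n + 1}" for t n
  proof (cases "t \<ge> of_int n")
    case True
    then have "\<lfloor>t\<rfloor> = n" using that by (intro floor_unique) auto
    then show ?thesis by (simp add: f_def algebra_simps)
  next
    case False
    then have fl: "\<lfloor>t\<rfloor> = n - 1" using that by (intro floor_unique) auto
    have "f t = ys a ((t + (1 - of_int n)) + 1)" by (simp add: f_def fl algebra_simps)
    also have "\<dots> = ys a (t + (1 - of_int n))" using False that by (intro ys_per) auto
    finally show ?thesis .
  qed
  have d: "(f has_real_derivative (Hs a - g (f x) - V x)) (at x)" for x
  proof -
    define n where "n = \<lfloor>x\<rfloor>"
    have xn: "of_int n \<le> x" "x < of_int n + 1" unfolding n_def by linarith+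
    have xin: "x + (1 - of_int n) \<in> {0<..<4}" using xn by auto
    have "(ys a has_real_derivative (Hs a - g (ys a (x + (1 - of_int n))) - V (x + (1 - of_int n)))) (at (x + (1 - of_int n)))"
      by (rule issol_at[OF ys_sol xin])
    then have "((\<lambda>t. ys a (t + (1 - of_int n))) has_real_derivative (Hs a - g (ys a (x + (1 - of_int n))) - V (x + (1 - of_int n)))) (at x)"
      by (simp add: DERIV_shift)
    then have "(f has_real_derivative (Hs a - g (ys a (x + (1 - of_int n))) - V (x + (1 - of_int n)))) (at x)"
      by (rule has_field_derivative_transform_within_open[where S="{of_int n - 1 <..< of_int n + 1}"])
         (use xn loc in auto)
    moreover have "ys a (x + (1 - of_int n)) = f x" using loc[of x n] xn by auto
    moreover have "V (x + (1 - of_int n)) = V x"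
      using periodic_int[OF Vp, of x "1 - n"] by simp
    ultimately show ?thesis by simp
  qed
  have p: "periodic1 f" unfolding periodic1_def f_def by simp
  have e: "f x = ys a x" if "x \<in> {0..1}" for x
  proof (cases "x = 1")
    case True
    then show ?thesis by (simp add: f_def)
  next
    case False
    then have "\<lfloor>x\<rfloor> = 0" using that by (intro floor_unique) auto
    then have "f x = ys a (x + 1)" by (simp add: f_def)
    also have "\<dots> = ys a x" using that by (intro ys_per) auto
    finally show ?thesis .
  qed
  show ?thesis using d p e by blast
qed

lemma exists_per:
  "\<exists>f H. (\<forall>x. (f has_real_derivative (H - g (f x) - V x)) (at x)) \<and> periodic1 f \<and> integral {0..1} f = \<theta>"
proof -
  obtain a where a: "m a = \<theta>" using m_hits by blast
  obtain f where f: "\<forall>x. (f has_real_derivative (Hs a - g (f x) - V x)) (at x)" "periodic1 f" "\<forall>x\<in>{0..1}. f x = ys a x"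
    using perext by blast
  have "integral {0..1} f = m a" unfolding m_def by (rule integral_cong) (use f(3) in auto)
  then show ?thesis using f a by blast
qed

end

lemma no_return:
  fixes h :: "real \<Rightarrow> real"
  assumes hc: "continuous_on UNIV h"
    and hz: "\<And>z. h z = 0 \<Longrightarrow> \<exists>d<0. (h has_real_derivative d) (at z)"
    and h0: "h x0 = 0" and h1: "h (x0 + 1) = 0"
  shows False
proof -
  obtain d where d: "d < 0" "(h has_real_derivative d) (at x0)" using hz[OF h0] by blast
  obtain e where e: "e > 0" "\<And>\<eta>. \<eta> > 0 \<Longrightarrow> \<eta> < e \<Longrightarrow> h x0 > h (x0 + \<eta>)"
    using DERIV_neg_dec_right[OF d(2) d(1)] by blast
  define \<eta> where "\<eta> = min e 1 / 2"
  have \<eta>: "\<eta> > 0" "\<eta> < e" "\<eta> < 1" using e by (auto simp: \<eta>_def)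
  have "h (x0 + \<eta>) < 0" using e(2)[OF \<eta>(1,2)] h0 by simp
  then have "h (x0 + 1) < 0"
    by (intro cross[of "x0 + \<eta>" "x0 + 1" h]) (use \<eta> hz in \<open>auto intro: continuous_on_subset[OF hc]\<close>)
  then show False using h1 by simp
qed

lemma range_bound:
  fixes f g V :: "real \<Rightarrow> real"
  assumes d: "\<And>x. (f has_real_derivative (H - g (f x) - V x)) (at x)"
    and per: "periodic1 f" and vb: "\<And>x. \<bar>V x\<bar> \<le> v"
  shows "\<bar>g (f x0) - H\<bar> \<le> v"
proof (rule ccontr)
  assume A: "\<not> \<bar>g (f x0) - H\<bar> \<le> v"
  have fc: "continuous_on UNIV f" by (rule has_real_derivative_imp_continuous_on) (use d in blast)
  have f1: "f (x0 + 1) = f x0" using per by (simp add: periodic1_def)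
  show False
  proof (cases "g (f x0) > H + v")
    case True
    show False
    proof (rule no_return[of "\<lambda>t. f t - f x0" x0])
      show "continuous_on UNIV (\<lambda>t. f t - f x0)" by (intro continuous_intros fc)
      fix z assume "f z - f x0 = 0"
      then have fz: "f z = f x0" by simp
      have "((\<lambda>t. f t - f x0) has_real_derivative (H - g (f z) - V z)) (at z)"
        using d[of z] by (auto intro!: derivative_eq_intros)
      moreover have "H - g (f z) - V z < 0" using True vb[of z] by (simp add: fz)
      ultimately show "\<exists>d<0. ((\<lambda>t. f t - f x0) has_real_derivative d) (at z)" by blast
    qed (use f1 in auto)
  next
    case False
    then have F: "g (f x0) < H - v" using A by linarith
    show False
    proof (rule no_return[of "\<lambda>t. f x0 - f t" x0])
      show "continuous_on UNIV (\<lambda>t. f x0 - f t)" by (intro continuous_intros fc)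
      fix z assume "f x0 - f z = 0"
      then have fz: "f z = f x0" by simp
      have "((\<lambda>t. f x0 - f t) has_real_derivative - (H - g (f z) - V z)) (at z)"
        using d[of z] by (auto intro!: derivative_eq_intros)
      moreover have "- (H - g (f z) - V z) < 0" using F vb[of z] by (simp add: fz)
      ultimately show "\<exists>d<0. ((\<lambda>t. f x0 - f t) has_real_derivative d) (at z)" by blast
    qed (use f1 in auto)
  qed
qed

lemma mean_attained:
  fixes f :: "real \<Rightarrow> real"
  assumes fc: "continuous_on {0..1} f" and I: "integral {0..1} f = \<theta>"
  shows "\<exists>x\<in>{0..1}. f x = \<theta>"
proof -
  obtain xm where xm: "xm \<in> {0..1}" "\<And>y. y \<in> {0..1} \<Longrightarrow> f xm \<le> f y"
    using continuous_attains_inf[OF compact_Icc _ fc] by auto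
  obtain xM where xM: "xM \<in> {0..1}" "\<And>y. y \<in> {0..1} \<Longrightarrow> f y \<le> f xM"
    using continuous_attains_sup[OF compact_Icc _ fc] by auto
  have fi: "f integrable_on {0..1}" by (rule integrable_continuous_real[OF fc])
  have "integral {0..1} (\<lambda>x::real. f xm) \<le> integral {0..1} f"
    by (rule Henstock_Kurzweil_Integration.integral_le) (use fi xm in auto)
  then have lo: "f xm \<le> \<theta>" using I by simp
  have "integral {0..1} f \<le> integral {0..1} (\<lambda>x::real. f xM)"
    by (rule Henstock_Kurzweil_Integration.integral_le) (use fi xM in auto)
  then have hi: "\<theta> \<le> f xM" using I by simp
  show ?thesis
  proof (cases "xm \<le> xM")
    case True
    have "\<exists>x\<ge>xm. x \<le> xM \<and> f x = \<theta>"
      by (rule IVT'[of f xm \<theta> xM, OF lo hi True]) (rule continuous_on_subset[OF fc], use xm xM in auto)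
    then show ?thesis using xm xM by force
  next
    case False
    have "\<exists>x\<ge>xM. x \<le> xm \<and> f x = \<theta>"
      by (rule IVT2'[of f xm \<theta> xM, OF lo hi]) (use False in simp, rule continuous_on_subset[OF fc], use xm xM in auto)
    then show ?thesis using xm xM by force
  qed
qed


definition clampM :: "real \<Rightarrow> real \<Rightarrow> real" where
  "clampM M p = max (-M) (min M p)"

lemma clampM_lip: "\<bar>clampM M p - clampM M q\<bar> \<le> \<bar>p - q\<bar>"
  unfolding clampM_def by (simp add: max_def min_def abs_if)

lemma clampM_id: "\<bar>p\<bar> \<le> M \<Longrightarrow> clampM M p = p"
  unfolding clampM_def by (auto simp: max_def min_def abs_if split: if_splits)

lemma clampM_range: "M \<ge> 0 \<Longrightarrow> \<bar>clampM M p\<bar> \<le> M"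
  unfolding clampM_def by (simp add: max_def min_def abs_if)

lemma C1_deriv:
  fixes G :: "real \<Rightarrow> real"
  assumes "G C1_differentiable_on UNIV"
  obtains D where "\<And>x. (G has_real_derivative D x) (at x)" "continuous_on UNIV D"
  using assms unfolding C1_differentiable_on_def has_real_derivative_iff_has_vector_derivative by blast

lemma C1_cont:
  fixes G :: "real \<Rightarrow> real"
  assumes "G C1_differentiable_on UNIV"
  shows "continuous_on UNIV G"
proof -
  obtain D where "\<And>x. (G has_real_derivative D x) (at x)" using C1_deriv[OF assms] by blast
  then show ?thesis by (intro has_real_derivative_imp_continuous_on) blast
qed

lemma C1_clamp:
  fixes G :: "real \<Rightarrow> real"
  assumes G: "G C1_differentiable_on UNIV" and M: "M \<ge> 0"
  shows "\<exists>K>0. \<forall>p q. \<bar>G (clampM M p) - G (clampM M q)\<bar> \<le> K * \<bar>p - q\<bar>"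
proof -
  obtain D where D: "\<And>x. (G has_real_derivative D x) (at x)" "continuous_on UNIV D" using C1_deriv[OF G] by blast
  have "\<exists>x\<in>{-M..M}. \<forall>y\<in>{-M..M}. \<bar>D y\<bar> \<le> \<bar>D x\<bar>"
    by (rule continuous_attains_sup[OF compact_Icc]) (use M in \<open>auto intro!: continuous_intros intro: continuous_on_subset[OF D(2)]\<close>)
  then obtain xs where xs: "xs \<in> {-M..M}" "\<And>y. y \<in> {-M..M} \<Longrightarrow> \<bar>D y\<bar> \<le> \<bar>D xs\<bar>" by blast
  define K where "K = \<bar>D xs\<bar> + 1"
  have K: "K > 0" by (simp add: K_def)
  have lipM: "\<bar>G p - G q\<bar> \<le> K * \<bar>p - q\<bar>" if pq: "p \<in> {-M..M}" "q \<in> {-M..M}" "p < q" for p q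
  proof -
    obtain z where z: "p < z" "z < q" "G q - G p = (q - p) * D z"
      using MVT2[of p q G D] pq(3) D(1) by blast
    have "z \<in> {-M..M}" using z pq by auto
    then have "\<bar>D z\<bar> \<le> K" using xs(2)[of z] by (simp add: K_def)
    then have "\<bar>(q - p) * D z\<bar> \<le> \<bar>p - q\<bar> * K" by (simp add: abs_mult abs_minus_commute mult_left_mono)
    then show ?thesis using z(3) by (simp add: abs_minus_commute mult.commute)
  qed
  have "\<bar>G (clampM M p) - G (clampM M q)\<bar> \<le> K * \<bar>p - q\<bar>" for p q
  proof -
    define a where "a = clampM M p"
    define b where "b = clampM M q"
    have ab: "a \<in> {-M..M}" "b \<in> {-M..M}" using clampM_range[OF M, of p] clampM_range[OF M, of q] unfolding a_def b_def by (auto simp: abs_le_iff)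
    have "\<bar>G a - G b\<bar> \<le> K * \<bar>a - b\<bar>"
    proof (cases a b rule: linorder_cases)
      case less then show ?thesis using lipM[OF ab less] by (simp add: abs_minus_commute)
    next
      case equal then show ?thesis by simp
    next
      case greater then show ?thesis using lipM[OF ab(2,1) greater] by (simp add: abs_minus_commute)
    qed
    also have "\<dots> \<le> K * \<bar>p - q\<bar>" using K clampM_lip[of M p q] unfolding a_def b_def by (intro mult_left_mono) auto
    finally show ?thesis unfolding a_def b_def .
  qed
  then show ?thesis using K by blast
qed

lemma per_bounded:
  fixes f :: "real \<Rightarrow> real"
  assumes fc: "continuous_on UNIV f" and p: "periodic1 f"
  shows "\<exists>M\<ge>0. \<forall>x. \<bar>f x\<bar> \<le> M"
proof -
  have "\<exists>x\<in>{0..1}. \<forall>y\<in>{0..1}. \<bar>f y\<bar> \<le> \<bar>f x\<bar>"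
    by (rule continuous_attains_sup[OF compact_Icc]) (auto intro!: continuous_intros intro: continuous_on_subset[OF fc])
  then obtain xs where xs: "xs \<in> {0..1}" "\<And>y. y \<in> {0..1} \<Longrightarrow> \<bar>f y\<bar> \<le> \<bar>f xs\<bar>" by blast
  have "\<bar>f x\<bar> \<le> \<bar>f xs\<bar>" for x
  proof -
    have "f x = f (x + real_of_int (- \<lfloor>x\<rfloor>))" using periodic_int[OF p, of x "- \<lfloor>x\<rfloor>"] by simp
    moreover have "x + real_of_int (- \<lfloor>x\<rfloor>) \<in> {0..1}" by auto linarith
    ultimately show ?thesis using xs(2) by auto
  qed
  then show ?thesis by (intro exI[of _ "\<bar>f xs\<bar>"]) auto
qed

lemma per_uniq:
  fixes f1 f2 G V :: "real \<Rightarrow> real"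
  assumes G: "G C1_differentiable_on UNIV"
    and d1: "\<And>x. (f1 has_real_derivative (H - G (f1 x) - V x)) (at x)"
    and d2: "\<And>x. (f2 has_real_derivative (H - G (f2 x) - V x)) (at x)"
    and p1: "periodic1 f1" and p2: "periodic1 f2" and z: "f1 z = f2 z"
  shows "f1 x = f2 x"
proof -
  have c1: "continuous_on UNIV f1" by (rule has_real_derivative_imp_continuous_on) (use d1 in blast)
  have c2: "continuous_on UNIV f2" by (rule has_real_derivative_imp_continuous_on) (use d2 in blast)
  obtain M1 where M1: "M1 \<ge> 0" "\<And>x. \<bar>f1 x\<bar> \<le> M1" using per_bounded[OF c1 p1] by blast
  obtain M2 where M2: "M2 \<ge> 0" "\<And>x. \<bar>f2 x\<bar> \<le> M2" using per_bounded[OF c2 p2] by blast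
  define M where "M = max M1 M2"
  have M: "M \<ge> 0" "\<And>x. \<bar>f1 x\<bar> \<le> M" "\<And>x. \<bar>f2 x\<bar> \<le> M"
    using M1 M2 unfolding M_def by (auto intro: order.trans[OF _ max.cobounded1] order.trans[OF _ max.cobounded2])
  obtain K where K: "K > 0" "\<And>p q. \<bar>G (clampM M p) - G (clampM M q)\<bar> \<le> K * \<bar>p - q\<bar>"
    using C1_clamp[OF G M(1)] by blast
  define g where "g p = G (clampM M p)" for p
  have e1: "g (f1 x) = G (f1 x)" for x unfolding g_def using clampM_id[OF M(2)] by simp
  have e2: "g (f2 x) = G (f2 x)" for x unfolding g_def using clampM_id[OF M(3)] by simp
  have eq: "f1 t = f2 t" if "t \<in> {z..z+1}" for t
  proof (rule uniq_gen[of g K z t f1 f2 H V])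
    show "\<And>p q. \<bar>g p - g q\<bar> \<le> K * \<bar>p - q\<bar>" unfolding g_def by (rule K(2))
    show "0 \<le> K" using K by simp
    show "z \<le> t" using that by simp
    show "continuous_on {z..t} f1" by (rule continuous_on_subset[OF c1]) auto
    show "continuous_on {z..t} f2" by (rule continuous_on_subset[OF c2]) auto
    show "(f1 has_real_derivative H - g (f1 x) - V x) (at x)" for x using d1[of x] by (simp add: e1)
    show "(f2 has_real_derivative H - g (f2 x) - V x) (at x)" for x using d2[of x] by (simp add: e2)
  qed (rule z)
  define k where "k = - \<lfloor>x - z\<rfloor>"
  have "x + real_of_int k \<in> {z..z+1}" unfolding k_def by auto linarith+
  then have "f1 (x + real_of_int k) = f2 (x + real_of_int k)" by (rule eq)
  then show ?thesis using periodic_int[OF p1, of x k] periodic_int[OF p2, of x k] by simp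
qed

lemma noncross_lt:
  fixes f1 f2 G V :: "real \<Rightarrow> real"
  assumes d1: "\<And>x. (f1 has_real_derivative (H1 - G (f1 x) - V x)) (at x)"
    and d2: "\<And>x. (f2 has_real_derivative (H2 - G (f2 x) - V x)) (at x)"
    and p1: "periodic1 f1" and p2: "periodic1 f2" and H: "H1 < H2"
  shows "f1 z \<noteq> f2 z"
proof
  assume z: "f1 z = f2 z"
  have c1: "continuous_on UNIV f1" by (rule has_real_derivative_imp_continuous_on) (use d1 in blast)
  have c2: "continuous_on UNIV f2" by (rule has_real_derivative_imp_continuous_on) (use d2 in blast)
  show False
  proof (rule no_return[of "\<lambda>t. f1 t - f2 t" z])
    show "continuous_on UNIV (\<lambda>t. f1 t - f2 t)" by (intro continuous_intros c1 c2)
    show "f1 z - f2 z = 0" using z by simp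
    show "f1 (z + 1) - f2 (z + 1) = 0" using z p1 p2 by (simp add: periodic1_def)
    fix w assume "f1 w - f2 w = 0"
    then have w: "f1 w = f2 w" by simp
    have "((\<lambda>t. f1 t - f2 t) has_real_derivative (H1 - G (f1 w) - V w) - (H2 - G (f2 w) - V w)) (at w)"
      by (intro DERIV_diff d1 d2)
    then have "((\<lambda>t. f1 t - f2 t) has_real_derivative H1 - H2) (at w)" using w by simp
    then show "\<exists>d<0. ((\<lambda>t. f1 t - f2 t) has_real_derivative d) (at w)" using H by (intro exI[of _ "H1 - H2"]) auto
  qed
qed

lemma noncross:
  fixes f1 f2 G V :: "real \<Rightarrow> real"
  assumes d1: "\<And>x. (f1 has_real_derivative (H1 - G (f1 x) - V x)) (at x)"
    and d2: "\<And>x. (f2 has_real_derivative (H2 - G (f2 x) - V x)) (at x)"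
    and p1: "periodic1 f1" and p2: "periodic1 f2" and H: "H1 \<noteq> H2"
  shows "f1 z \<noteq> f2 z"
proof (cases "H1 < H2")
  case True
  then show ?thesis using noncross_lt[OF d1 d2 p1 p2] by blast
next
  case False
  then have "H2 < H1" using H by simp
  then show ?thesis using noncross_lt[OF d2 d1 p2 p1] by metis
qed

lemma corr_deriv:
  assumes "corrector G V \<theta> f H"
  shows "(f has_real_derivative (H - G (f x) - V x)) (at x)"
proof -
  obtain D where D: "\<And>x. (f has_real_derivative D x) (at x)"
    using assms unfolding corrector_def C1_differentiable_on_def has_real_derivative_iff_has_vector_derivative by blast
  have "deriv f x = D x" by (rule DERIV_imp_deriv[OF D])
  moreover have "deriv f x = H - G (f x) - V x" using assms unfolding corrector_def by (auto simp: algebra_simps)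
  ultimately show ?thesis using D[of x] by simp
qed

lemma corr_per: "corrector G V \<theta> f H \<Longrightarrow> periodic1 f" unfolding corrector_def by blast
lemma corr_int: "corrector G V \<theta> f H \<Longrightarrow> integral {0..1} f = \<theta>" unfolding corrector_def by blast

lemma corr_unique:
  assumes G: "G C1_differentiable_on UNIV"
    and c1: "corrector G V \<theta> f1 H1" and c2: "corrector G V \<theta> f2 H2"
  shows "f1 = f2"
proof -
  note d1 = corr_deriv[OF c1] and d2 = corr_deriv[OF c2]
  have cf1: "continuous_on UNIV f1" by (rule has_real_derivative_imp_continuous_on) (use d1 in blast)
  have cf2: "continuous_on UNIV f2" by (rule has_real_derivative_imp_continuous_on) (use d2 in blast)
  have i1: "f1 integrable_on {0..1}" by (rule integrable_continuous_real, rule continuous_on_subset[OF cf1]) auto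
  have i2: "f2 integrable_on {0..1}" by (rule integrable_continuous_real, rule continuous_on_subset[OF cf2]) auto
  have "integral {0..1} (\<lambda>x. f1 x - f2 x) = 0"
    using corr_int[OF c1] corr_int[OF c2] by (simp add: integral_diff i1 i2)
  then have "\<exists>x\<in>{0..1}. (\<lambda>x. f1 x - f2 x) x = 0"
    by (intro mean_attained) (rule continuous_on_subset[OF continuous_on_diff[OF cf1 cf2]], auto)
  then obtain z where z: "f1 z = f2 z" by auto
  have H: "H1 = H2" using noncross[OF d1 d2 corr_per[OF c1] corr_per[OF c2]] z by blast
  show ?thesis
    using per_uniq[OF G d1 d2[unfolded H[symmetric]] corr_per[OF c1] corr_per[OF c2] z] by blast
qed


lemma corr_exists:
  fixes G V :: "real \<Rightarrow> real"
  assumes G: "G C1_differentiable_on UNIV" and co: "coercive G"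
    and Vl: "\<exists>L. lipschitz_on L UNIV V" and Vp: "periodic1 V"
  shows "\<exists>f H. corrector G V \<theta> f H"
proof -
  have Gc: "continuous_on UNIV G" by (rule C1_cont[OF G])
  obtain LV where "lipschitz_on LV UNIV V" using Vl by blast
  then have Vc: "continuous_on UNIV V" by (rule lipschitz_on_continuous_on)
  obtain v where v: "v \<ge> 0" "\<And>x. \<bar>V x\<bar> \<le> v" using per_bounded[OF Vc Vp] by blast
  define c where "c = G \<theta> + 2 * v"
  have "eventually (\<lambda>p. c < G p) at_top" using co unfolding coercive_def filterlim_at_top_dense by blast
  then obtain R1 where R1: "\<And>p. p \<ge> R1 \<Longrightarrow> c < G p" unfolding eventually_at_top_linorder by blast
  have "eventually (\<lambda>p. c < G p) at_bot" using co unfolding coercive_def filterlim_at_top_dense by blast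
  then obtain R2 where R2: "\<And>p. p \<le> R2 \<Longrightarrow> c < G p" unfolding eventually_at_bot_linorder by blast
  define R where "R = max (max R1 (-R2)) (\<bar>\<theta>\<bar> + 1)"
  have R0: "R \<ge> 0" and R\<theta>: "\<bar>\<theta>\<bar> \<le> R" unfolding R_def by auto
  have Rp: "c < G p" if "p \<ge> R" for p using R1[of p] that unfolding R_def by auto
  have Rm: "c < G p" if "p \<le> -R" for p using R2[of p] that unfolding R_def by auto
  obtain K where K: "K > 0" "\<And>p q. \<bar>G (clampM R p) - G (clampM R q)\<bar> \<le> K * \<bar>p - q\<bar>"
    using C1_clamp[OF G R0] by blast
  define g where "g p = G (clampM R p)" for p
  have "\<exists>x\<in>{-R..R}. \<forall>y\<in>{-R..R}. \<bar>G y\<bar> \<le> \<bar>G x\<bar>"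
    by (rule continuous_attains_sup[OF compact_Icc]) (use R0 in \<open>auto intro!: continuous_intros intro: continuous_on_subset[OF Gc]\<close>)
  then obtain xs where xs: "\<And>y. y \<in> {-R..R} \<Longrightarrow> \<bar>G y\<bar> \<le> \<bar>G xs\<bar>" by blast
  define B where "B = max \<bar>G xs\<bar> v"
  have gB: "\<bar>g p\<bar> \<le> B" for p
  proof -
    have "clampM R p \<in> {-R..R}" using clampM_range[OF R0, of p] by (auto simp: abs_le_iff)
    then show ?thesis using xs unfolding g_def B_def by (meson max.coboundedI1)
  qed
  have VB: "\<bar>V x\<bar> \<le> B" for x using v(2)[of x] unfolding B_def by (meson max.coboundedI2)
  interpret clip g V K B
    by unfold_locales (use K gB VB Vc Vp in \<open>auto simp: g_def\<close>)
  obtain f H where fd: "\<And>x. (f has_real_derivative (H - g (f x) - V x)) (at x)"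
      and fp: "periodic1 f" and fi: "integral {0..1} f = \<theta>"
    using exists_per[of \<theta>] by blast
  have rb: "\<bar>g (f x) - H\<bar> \<le> v" for x by (rule range_bound[OF fd fp v(2)])
  have fc: "continuous_on UNIV f" by (rule has_real_derivative_imp_continuous_on) (use fd in blast)
  have "\<exists>y\<in>{0..1}. f y = \<theta>" by (rule mean_attained[OF _ fi]) (rule continuous_on_subset[OF fc], auto)
  then obtain y where y: "f y = \<theta>" by blast
  have g\<theta>: "g \<theta> = G \<theta>" unfolding g_def using clampM_id[OF R\<theta>] by simp
  have up: "g (f x) \<le> c" for x
  proof -
    have "\<bar>G \<theta> - H\<bar> \<le> v" using rb[of y] y g\<theta> by simp
    then show ?thesis using rb[of x] unfolding c_def by linarith
  qed
  have inR: "\<bar>f x\<bar> \<le> R" for x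
  proof (rule ccontr)
    assume "\<not> \<bar>f x\<bar> \<le> R"
    then have "f x > R \<or> f x < -R" by linarith
    then show False
    proof
      assume "f x > R"
      then have "clampM R (f x) = R" unfolding clampM_def using R0 by simp
      then show False using up[of x] Rp[of R] unfolding g_def by simp
    next
      assume "f x < -R"
      then have "clampM R (f x) = -R" unfolding clampM_def using R0 by simp
      then show False using up[of x] Rm[of "-R"] unfolding g_def by simp
    qed
  qed
  have gG: "g (f x) = G (f x)" for x unfolding g_def using clampM_id[OF inR] by simp
  have fd': "(f has_real_derivative (H - G (f x) - V x)) (at x)" for x using fd[of x] by (simp add: gG)
  have "corrector G V \<theta> f H"
    unfolding corrector_def
  proof (intro conjI allI)
    show "f C1_differentiable_on UNIV"
      unfolding C1_differentiable_on_def
    proof (intro exI[of _ "\<lambda>x. H - G (f x) - V x"] conjI ballI)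
      fix x show "(f has_vector_derivative H - G (f x) - V x) (at x)"
        using fd' by (simp add: has_real_derivative_iff_has_vector_derivative[symmetric])
    next
      show "continuous_on UNIV (\<lambda>x. H - G (f x) - V x)"
        by (intro continuous_intros Vc continuous_on_compose2[OF Gc fc]) auto
    qed
    show "periodic1 f" by (rule fp)
    show "integral {0..1} f = \<theta>" by (rule fi)
    fix x show "deriv f x + G (f x) + V x = H" using DERIV_imp_deriv[OF fd'[of x]] by simp
  qed
  then show ?thesis by blast
qed

theorem lemma4p3:
  fixes G V :: "real \<Rightarrow> real" and \<theta>1 \<theta>2 :: real
  assumes "G C1_differentiable_on UNIV"
    and "coercive G"
    and "\<exists>L. lipschitz_on L UNIV V"
    and "periodic1 V"
    and "\<theta>1 < \<theta>2"
  shows "\<forall>x. f_theta G V \<theta>1 x < f_theta G V \<theta>2 x"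
proof -
  note G = assms(1)
  have ft: "\<exists>H. corrector G V \<theta> (f_theta G V \<theta>) H" for \<theta>
  proof -
    have "\<exists>!f. \<exists>H. corrector G V \<theta> f H"
    proof -
      obtain f H where "corrector G V \<theta> f H" using corr_exists[OF assms(1-4)] by blast
      moreover have "f' = f" if "\<exists>H'. corrector G V \<theta> f' H'" for f'
        using that corr_unique[OF G _ \<open>corrector G V \<theta> f H\<close>] by blast
      ultimately show ?thesis by blast
    qed
    then show ?thesis unfolding f_theta_def by (rule theI')
  qed
  obtain H1 where c1: "corrector G V \<theta>1 (f_theta G V \<theta>1) H1" using ft by blast
  obtain H2 where c2: "corrector G V \<theta>2 (f_theta G V \<theta>2) H2" using ft by blast
  define f1 where "f1 = f_theta G V \<theta>1"
  define f2 where "f2 = f_theta G V \<theta>2"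
  note c1 = c1[folded f1_def] and c2 = c2[folded f2_def]
  note d1 = corr_deriv[OF c1] and d2 = corr_deriv[OF c2]
  have cf1: "continuous_on UNIV f1" by (rule has_real_derivative_imp_continuous_on) (use d1 in blast)
  have cf2: "continuous_on UNIV f2" by (rule has_real_derivative_imp_continuous_on) (use d2 in blast)
  have nz: "f2 z - f1 z \<noteq> 0" for z
  proof
    assume "f2 z - f1 z = 0"
    then have z: "f1 z = f2 z" by simp
    have H: "H1 = H2" using noncross[OF d1 d2 corr_per[OF c1] corr_per[OF c2]] z by blast
    have "f1 x = f2 x" for x
      using per_uniq[OF G d1 d2[unfolded H[symmetric]] corr_per[OF c1] corr_per[OF c2] z] by blast
    then have "f1 = f2" by blast
    then show False using corr_int[OF c1] corr_int[OF c2] assms(5) by simp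
  qed
  have i1: "f1 integrable_on {0..1}" by (rule integrable_continuous_real, rule continuous_on_subset[OF cf1]) auto
  have i2: "f2 integrable_on {0..1}" by (rule integrable_continuous_real, rule continuous_on_subset[OF cf2]) auto
  have hc: "continuous_on UNIV (\<lambda>x. f2 x - f1 x)" by (intro continuous_intros cf1 cf2)
  have "integral {0..1} (\<lambda>x. f2 x - f1 x) = \<theta>2 - \<theta>1"
    using corr_int[OF c1] corr_int[OF c2] by (simp add: integral_diff i1 i2)
  then have "\<exists>x\<in>{0..1}. (\<lambda>x. f2 x - f1 x) x = \<theta>2 - \<theta>1"
    by (intro mean_attained) (rule continuous_on_subset[OF hc], auto)
  then obtain z0 where "f2 z0 - f1 z0 = \<theta>2 - \<theta>1" by auto
  then have z0: "f2 z0 - f1 z0 > 0" using assms(5) by simp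
  show ?thesis unfolding f1_def[symmetric] f2_def[symmetric]
  proof
    fix x
    show "f1 x < f2 x"
    proof (rule ccontr)
      assume "\<not> f1 x < f2 x"
      then have hx: "f2 x - f1 x \<le> 0" by simp
      show False
      proof (cases "x \<le> z0")
        case True
        have "\<exists>t\<ge>x. t \<le> z0 \<and> f2 t - f1 t = 0"
          by (rule IVT'[of "\<lambda>t. f2 t - f1 t" x 0 z0]) (use hx z0 True in \<open>auto intro: continuous_on_subset[OF hc]\<close>)
        then show False using nz by blast
      next
        case False
        have "\<exists>t\<ge>z0. t \<le> x \<and> f2 t - f1 t = 0"
          by (rule IVT2'[of "\<lambda>t. f2 t - f1 t" x 0 z0]) (use hx z0 False in \<open>auto intro: continuous_on_subset[OF hc]\<close>)
        then show False using nz by blast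
      qed
    qed
  qed
qed

end
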